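(* Let $\ell>0$. The functions $D_\ell$, $\Gamma_\ell$ and $\sqrt{\Gamma_\ell}$ on $\mathbb R_+$ are positive, globally Lipschitz continuous and bounded. The function $A_\ell$ is bounded above but not below; it has continuous first derivative on all of $\mathbb R_+$ and is locally Lipschitz, in particular $|A_\ell(x)-A_\ell(y)|\lesssim(1+|x|)|y-x|$ for $x,y\in\mathbb R_+$. Moreover $A_\ell(x)>0$ for $x\in[0,1)$, $A_\ell(x)<0$ for $x>1$, and $A_\ell(1)=0$.
   Context: $\mathbb R_+=[0,\infty)$; $a\lesssim b$ means $a\le Kb$ for a constant $K$ independent of $x,y$. With $\Phi$ the standard normal cdf: for $x>0$, $D_\ell(x)=2\ell^2e^{\ell^2(x-1)}\Phi\big(\tfrac{\ell(1-2x)}{\sqrt{2x}}\big)$, $\Gamma_\ell(x)=D_\ell(x)+2\ell^2\Phi\big(-\tfrac{\ell}{\sqrt{2x}}\big)$, $A_\ell(x)=-2xD_\ell(x)+\Gamma_\ell(x)$; and $D_\ell(0)=\Gamma_\ell(0)=A_\ell(0)=2\ell^2e^{-\ell^2}$. *)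

theory Defs
  imports "HOL-Probability.Probability"
begin

definition Phi :: "real \<Rightarrow> real" where
  "Phi x = (LINT t:{..x}|lborel. std_normal_density t)"

definition D_fun :: "real \<Rightarrow> real \<Rightarrow> real" where
  "D_fun l x = (if x = 0 then 2 * l\<^sup>2 * exp (- l\<^sup>2)
     else 2 * l\<^sup>2 * exp (l\<^sup>2 * (x - 1)) * Phi (l * (1 - 2 * x) / sqrt (2 * x)))"

definition Gamma_fun :: "real \<Rightarrow> real \<Rightarrow> real" where
  "Gamma_fun l x = (if x = 0 then 2 * l\<^sup>2 * exp (- l\<^sup>2)
     else D_fun l x + 2 * l\<^sup>2 * Phi (- l / sqrt (2 * x)))"

definition A_fun :: "real \<Rightarrow> real \<Rightarrow> real" where
  "A_fun l x = (if x = 0 then 2 * l\<^sup>2 * exp (- l\<^sup>2)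
     else - 2 * x * D_fun l x + Gamma_fun l x)"

end

theory Submission
  imports Defs "HOL-Real_Asymp.Real_Asymp"
begin

abbreviation "phi \<equiv> std_normal_density"

lemma phi_pos: "phi x > 0" by (simp add: std_normal_density_def)
lemma phi_cont: "continuous_on S phi"
  unfolding std_normal_density_def by (intro continuous_intros) auto
lemma phi_le: "phi x \<le> 1"
proof -
  have "exp (- x\<^sup>2/2) \<le> 1" by simp
  moreover have "1 / sqrt (2*pi) \<le> 1" using pi_gt3 by (simp add: divide_le_eq)
  ultimately show ?thesis unfolding std_normal_density_def
    by (metis exp_gt_zero less_eq_real_def mult_le_one zero_le_divide_1_iff real_sqrt_ge_zero) 
qed

lemma phi_int: "integrable lborel phi"
  using integrable_std_normal_moment[of 0] by simp

lemma phi_setint: "set_integrable lborel A phi" if "A \<in> sets borel"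
  using that phi_int unfolding set_integrable_def
  by (intro integrable_mult_indicator) auto

lemma Phi_meas: "Phi x = measure (density lborel phi) {..x}"
proof -
  have "emeasure (density lborel phi) {..x} = (\<integral>\<^sup>+ t. ennreal (phi t) * indicator {..x} t \<partial>lborel)"
    by (subst emeasure_density) auto
  also have "\<dots> = (\<integral>\<^sup>+ t. ennreal (indicator {..x} t *\<^sub>R phi t) \<partial>lborel)"
    by (intro nn_integral_cong) (auto simp: indicator_def)
  also have "\<dots> = ennreal (Phi x)"
    unfolding Phi_def set_lebesgue_integral_def
    by (intro nn_integral_eq_integral) (use phi_setint[of "{..x}"] in \<open>auto simp: set_integrable_def indicator_def less_imp_le[OF phi_pos]\<close>)
  finally show ?thesis unfolding measure_def
    by (simp add: Phi_def set_lebesgue_integral_def less_imp_le[OF phi_pos])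
qed

interpretation N: real_distribution "density lborel phi"
  by (intro real_distribution.intro prob_space_normal_density real_distribution_axioms.intro) simp_all

lemma Phi_cdf: "Phi = cdf (density lborel phi)"
  by (auto simp: fun_eq_iff Phi_meas cdf_def)

lemma Phi_at_bot: "(Phi \<longlongrightarrow> 0) at_bot"
  unfolding Phi_cdf by (rule N.cdf_lim_at_bot)
lemma Phi_at_top: "(Phi \<longlongrightarrow> 1) at_top"
  unfolding Phi_cdf by (rule N.cdf_lim_at_top_prob)

lemma Phi_HK: "Phi x = integral {..x} phi"
  unfolding Phi_def by (rule set_borel_integral_eq_integral(2)[OF phi_setint]) simp

lemma phi_int_on: "phi integrable_on S" if "S \<in> sets borel"
  by (rule set_borel_integral_eq_integral(1)[OF phi_setint[OF that]])

lemma Phi_split: "Phi y = Phi a + integral {a..y} phi" if "a \<le> y"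
proof -
  have "(phi has_integral (Phi a + integral {a..y} phi)) ({..a} \<union> {a..y})"
    by (intro has_integral_Un) (auto simp: Phi_HK intro!: integrable_integral phi_int_on
         intro: negligible_subset[of "{a}"])
  moreover have "{..a} \<union> {a..y} = {..y}" using that by auto
  ultimately show ?thesis unfolding Phi_HK by (simp add: integral_unique)
qed

lemma Phi_deriv: "(Phi has_real_derivative phi x) (at x)"
proof -
  have h: "((\<lambda>y. integral {x-1..y} phi) has_real_derivative phi x) (at x within {x-1..x+1})"
    by (rule integral_has_real_derivative[OF phi_cont]) auto
  have "((\<lambda>y. Phi (x-1) + integral {x-1..y} phi) has_real_derivative 0 + phi x) (at x within {x-1..x+1})"
    by (rule DERIV_add[OF DERIV_const h])
  then have "((\<lambda>y. Phi (x-1) + integral {x-1..y} phi) has_real_derivative phi x) (at x)"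
    by (simp add: at_within_Icc_at)
  then show ?thesis
    by (rule has_field_derivative_transform_within_open[where S="{x-1<..<x+1}"]) (auto simp: Phi_split[symmetric])
qed

lemma Phi_deriv' [derivative_intros]:
  "(g has_real_derivative g') (at x within S) \<Longrightarrow>
   ((\<lambda>x. Phi (g x)) has_real_derivative phi (g x) * g') (at x within S)"
  using DERIV_chain2[OF Phi_deriv] by blast

lemma Phi_cont: "continuous_on S Phi"
  using Phi_deriv by (meson DERIV_isCont continuous_at_imp_continuous_on)

lemma isCont_Phi: "isCont Phi x" using Phi_deriv DERIV_isCont by blast

lemma Phi_less: "x < y \<Longrightarrow> Phi x < Phi y"
  by (rule DERIV_pos_imp_increasing[of x y Phi]) (use Phi_deriv phi_pos in auto)

lemma Phi_le: "x \<le> y \<Longrightarrow> Phi x \<le> Phi y"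
  using Phi_less by (cases "x = y") (auto intro: less_imp_le)

lemma Phi_pos: "Phi x > 0"
proof -
  have "0 \<le> Phi (x - 1)"
  proof (rule tendsto_upperbound[OF Phi_at_bot])
    show "\<forall>\<^sub>F z in at_bot. Phi z \<le> Phi (x - 1)"
      unfolding eventually_at_bot_linorder by (auto intro!: exI[of _ "x-1"] Phi_le)
  qed simp
  also have "\<dots> < Phi x" by (rule Phi_less) simp
  finally show ?thesis .
qed

lemma Phi_lt1: "Phi x < 1"
proof -
  have "Phi x < Phi (x + 1)" by (rule Phi_less) simp
  also have "\<dots> \<le> 1"
  proof (rule tendsto_lowerbound[OF Phi_at_top])
    show "\<forall>\<^sub>F z in at_top. Phi (x+1) \<le> Phi z"
      unfolding eventually_at_top_linorder by (auto intro!: exI[of _ "x+1"] Phi_le)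
  qed simp
  finally show ?thesis .
qed

lemma Phi_neg_at_top: "((\<lambda>z. Phi (-z)) \<longlongrightarrow> 0) at_top"
  by (rule filterlim_compose[OF Phi_at_bot]) real_asymp

lemma phi_deriv [derivative_intros]:
  "(g has_real_derivative g') (at x within S) \<Longrightarrow>
   ((\<lambda>x. phi (g x)) has_real_derivative (- g x * phi (g x)) * g') (at x within S)"
  unfolding std_normal_density_def
  by (auto intro!: derivative_eq_intros simp: field_simps power2_eq_square)

lemma phi_minus [simp]: "phi (-x) = phi x" by (simp add: std_normal_density_def)

lemma phi_at_top: "(phi \<longlongrightarrow> 0) at_top"
  unfolding std_normal_density_def by real_asymp

lemma pos_from_decr:
  fixes g g' :: "real \<Rightarrow> real"
  assumes d: "\<And>t. t \<ge> z \<Longrightarrow> (g has_real_derivative g' t) (at t)"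
    and n: "\<And>t. t \<ge> z \<Longrightarrow> g' t < 0" and lim: "(g \<longlongrightarrow> 0) at_top"
  shows "g z > 0"
proof -
  have dec: "g b < g a" if "z \<le> a" "a < b" for a b
  proof -
    have "\<forall>x. a \<le> x \<and> x \<le> b \<longrightarrow> (\<exists>y. DERIV g x :> y \<and> y < 0)"
      using d n that by (meson order_trans)
    then show ?thesis using DERIV_neg_imp_decreasing[of a b g] that by blast
  qed
  have "0 \<le> g (z+1)"
  proof (rule tendsto_upperbound[OF lim])
    show "\<forall>\<^sub>F t in at_top. g t \<le> g (z + 1)"
      unfolding eventually_at_top_linorder
      by (rule exI[of _ "z+1"]) (auto intro: less_imp_le dec simp: order.order_iff_strict)
  qed simp
  also have "\<dots> < g z" by (rule dec) auto
  finally show ?thesis .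
qed

lemma mills_upper: "z > 0 \<Longrightarrow> Phi (-z) < phi z / z"
proof -
  assume z: "z > 0"
  have "phi z / z - Phi (-z) > 0"
  proof (rule pos_from_decr[where g = "\<lambda>t. phi t / t - Phi (-t)" and g' = "\<lambda>t. - phi t / t\<^sup>2"])
    fix t assume "z \<le> t"
    then have t: "t > 0" using z by simp
    show "((\<lambda>t. phi t / t - Phi (- t)) has_real_derivative - phi t / t\<^sup>2) (at t)"
      using t by (auto intro!: derivative_eq_intros simp: field_simps power2_eq_square)
    show "- phi t / t\<^sup>2 < 0" using t phi_pos[of t] by (simp add: divide_pos_pos)
  next
    show "((\<lambda>t. phi t / t - Phi (- t)) \<longlongrightarrow> 0) at_top"
    proof -
      have "((\<lambda>t. phi t / t) \<longlongrightarrow> 0) at_top"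
        unfolding std_normal_density_def by real_asymp
      from tendsto_diff[OF this Phi_neg_at_top] show ?thesis by simp
    qed
  qed
  then show ?thesis by simp
qed

lemma mills_lower: "z > 0 \<Longrightarrow> Phi (-z) > z * phi z / (1 + z\<^sup>2)"
proof -
  assume z: "z > 0"
  have "Phi (-z) - z * phi z / (1 + z\<^sup>2) > 0"
  proof (rule pos_from_decr[where g = "\<lambda>t. Phi (-t) - t * phi t / (1 + t\<^sup>2)" and g' = "\<lambda>t. - 2 * phi t / ((1 + t\<^sup>2) * (1 + t\<^sup>2))"])
    fix t assume "z \<le> t"
    then have t: "t > 0" using z by simp
    have "1 + t\<^sup>2 > 0" by (simp add: add_pos_nonneg)
    then have ne: "1 + t\<^sup>2 \<noteq> 0" by simp
    show "((\<lambda>t. Phi (-t) - t * phi t / (1 + t\<^sup>2)) has_real_derivative - 2 * phi t / ((1 + t\<^sup>2) * (1 + t\<^sup>2))) (at t)"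
    proof -
      have B: "1 + (t ^ 4 + 2 * t\<^sup>2) \<noteq> 0" by (smt (verit) zero_le_power2 zero_le_power_eq_numeral even_numeral)
      show ?thesis using t ne B by (auto intro!: derivative_eq_intros simp: field_simps) (simp add: algebra_simps eval_nat_numeral)
    qed
    show "- 2 * phi t / ((1 + t\<^sup>2) * (1 + t\<^sup>2)) < 0" using ne phi_pos[of t]
      by (simp add: divide_pos_pos add_pos_nonneg)
  next
    show "((\<lambda>t. Phi (-t) - t * phi t / (1 + t\<^sup>2)) \<longlongrightarrow> 0) at_top"
    proof -
      have "((\<lambda>t. t * phi t / (1 + t\<^sup>2)) \<longlongrightarrow> 0) at_top"
        unfolding std_normal_density_def by real_asymp
      from tendsto_diff[OF Phi_neg_at_top this] show ?thesis by simp
    qed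
  qed
  then show ?thesis by simp
qed

definition kk :: "real \<Rightarrow> real" where "kk z = z * Phi (-z) / phi z"

lemma kk_deriv: "(kk has_real_derivative ((1 + z\<^sup>2) * Phi (-z) / phi z - z)) (at z)"
proof -
  have "phi z > 0" by (rule phi_pos)
  then show ?thesis unfolding kk_def
    by (auto intro!: derivative_eq_intros simp: field_simps power2_eq_square)
qed

lemma kk_deriv_pos: "z \<ge> 0 \<Longrightarrow> (1 + z\<^sup>2) * Phi (-z) / phi z - z > 0"
proof -
  assume z: "z \<ge> 0"
  have p: "phi z > 0" by (rule phi_pos)
  show ?thesis
  proof (cases "z = 0")
    case True then show ?thesis using Phi_pos[of 0] p by simp
  next
    case False
    then have "z > 0" using z by simp
    have pos: "1 + z\<^sup>2 > 0" by (simp add: add_pos_nonneg)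
    from mills_lower[OF \<open>z > 0\<close>] pos have "z * phi z < Phi (-z) * (1 + z\<^sup>2)"
      by (simp add: pos_divide_less_eq)
    moreover have "(1 + z\<^sup>2) * Phi (-z) / phi z - z = ((1 + z\<^sup>2) * Phi (-z) - z * phi z) / phi z"
      using p by (simp add: field_simps)
    ultimately show ?thesis using p by (simp add: algebra_simps)
  qed
qed

lemma kk_mono: "0 \<le> a \<Longrightarrow> a < b \<Longrightarrow> kk a < kk b"
  by (rule DERIV_pos_imp_increasing[of a b kk]) (use kk_deriv kk_deriv_pos in \<open>auto intro!: exI\<close>)

lemma kk_nonpos: "z \<le> 0 \<Longrightarrow> kk z \<le> 0"
  unfolding kk_def using Phi_pos[of "-z"] phi_pos[of z]
  by (simp add: divide_nonpos_pos mult_nonpos_nonneg)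

lemma kk_pos: "z > 0 \<Longrightarrow> kk z > 0"
  unfolding kk_def using Phi_pos[of "-z"] phi_pos[of z] by simp

lemma kk_less: "0 < u \<Longrightarrow> w < u \<Longrightarrow> kk w < kk u"
  by (cases "w \<le> 0") (use kk_nonpos kk_pos kk_mono in \<open>fastforce+\<close>)

lemma sq2x: "x > 0 \<Longrightarrow> (sqrt (2*x))\<^sup>2 = 2 * x" by simp

lemma exp_repr:
  assumes l: "l > 0" and x: "x > 0"
  defines "sq \<equiv> sqrt (2*x)"
  shows "exp (l\<^sup>2 * (x - 1)) = phi (l/sq) / phi (l* sq - l/sq)"
proof -
  have sq: "sq > 0" "sq\<^sup>2 = 2*x" using x by (auto simp: sq_def)
  have "phi (l/sq) / phi (l* sq - l/sq) = exp ((l* sq - l/sq)\<^sup>2/2 - (l/sq)\<^sup>2/2)"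
    unfolding std_normal_density_def by (simp add: exp_diff[symmetric])
  also have "(l* sq - l/sq)\<^sup>2/2 - (l/sq)\<^sup>2/2 = (l\<^sup>2 * sq\<^sup>2 - 2*l\<^sup>2)/2"
    using sq(1) by (simp add: power2_eq_square field_simps)
  also have "\<dots> = l\<^sup>2 * (x - 1)"
    using sq by (simp add: field_simps)
  finally show ?thesis by simp
qed

lemma D_repr:
  assumes l: "l > 0" and x: "x > 0"
  defines "sq \<equiv> sqrt (2*x)"
  shows "D_fun l x = 2 * l\<^sup>2 * phi (l/sq) * (Phi (-(l* sq - l/sq)) / phi (l* sq - l/sq))"
proof -
  have sq: "sq > 0" "sq\<^sup>2 = 2*x" using x by (auto simp: sq_def)
  have a: "l * (1 - 2 * x) / sqrt (2 * x) = -(l* sq - l/sq)"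
    using sq unfolding sq_def[symmetric] by (simp add: field_simps power2_eq_square)
  show ?thesis using x unfolding D_fun_def a exp_repr[OF l x] sq_def by simp
qed

lemma A_repr:
  assumes l: "l > 0" and x: "x > 0"
  defines "sq \<equiv> sqrt (2*x)"
  shows "A_fun l x = 2 * l\<^sup>2 * phi (l/sq) / (l/sq) * (kk (l/sq) - kk (l* sq - l/sq))"
proof -
  have sq: "sq > 0" "sq\<^sup>2 = 2*x" using x by (auto simp: sq_def)
  have p: "phi (l/sq) > 0" "phi (l* sq - l/sq) > 0" by (auto intro: phi_pos)
  have "A_fun l x = (1 - 2*x) * D_fun l x + 2 * l\<^sup>2 * Phi (-(l/sq))"
    using x unfolding A_fun_def Gamma_fun_def sq_def by (simp add: algebra_simps)
  also have "\<dots> = 2 * l\<^sup>2 * phi (l/sq) / (l/sq) * (kk (l/sq) - kk (l* sq - l/sq))"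
    unfolding D_repr[OF l x] kk_def sq_def[symmetric] using sq p l
    by (simp add: field_simps power2_eq_square)
  finally show ?thesis .
qed

lemma A_factor_pos: "l > 0 \<Longrightarrow> sq > 0 \<Longrightarrow> 2 * l\<^sup>2 * phi (l/sq) / (l/sq) > 0"
  using phi_pos by simp

lemma A_pos_lt1:
  assumes l: "l > 0" and x: "0 \<le> x" "x < 1"
  shows "A_fun l x > 0"
proof (cases "x = 0")
  case True then show ?thesis using l by (simp add: A_fun_def)
next
  case False
  then have x0: "x > 0" using x by simp
  define sq where "sq = sqrt (2*x)"
  have sq: "sq > 0" "sq * sq = 2*x" using x0 by (auto simp: sq_def)
  have "l* sq - l/sq < l/sq" using sq l x by (simp add: field_simps)
  then have "kk (l* sq - l/sq) < kk (l/sq)" by (intro kk_less) (use l sq in auto)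
  then show ?thesis unfolding A_repr[OF l x0] sq_def[symmetric]
    by (intro mult_pos_pos A_factor_pos) (use l sq in auto)
qed

lemma A_neg_gt1:
  assumes l: "l > 0" and x: "x > 1"
  shows "A_fun l x < 0"
proof -
  have x0: "x > 0" using x by simp
  define sq where "sq = sqrt (2*x)"
  have sq: "sq > 0" "sq * sq = 2*x" using x0 by (auto simp: sq_def)
  have "l/sq < l* sq - l/sq" using sq l x by (simp add: field_simps)
  then have "kk (l/sq) < kk (l* sq - l/sq)" by (intro kk_mono) (use l sq in auto)
  then show ?thesis unfolding A_repr[OF l x0] sq_def[symmetric]
    by (intro mult_pos_neg A_factor_pos) (use l sq in auto)
qed

lemma A_one: "A_fun l 1 = 0"
  by (simp add: A_fun_def Gamma_fun_def D_fun_def)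

lemma mvt_bound:
  fixes f f' :: "real \<Rightarrow> real"
  assumes pq: "p \<le> q" and c: "continuous_on {p..q} f"
    and d: "\<And>t. p < t \<Longrightarrow> t < q \<Longrightarrow> (f has_real_derivative f' t) (at t)"
    and b: "\<And>t. p < t \<Longrightarrow> t < q \<Longrightarrow> \<bar>f' t\<bar> \<le> B"
  shows "\<bar>f q - f p\<bar> \<le> B * (q - p)"
proof (cases "p = q")
  case True then show ?thesis by simp
next
  case False
  then have lt: "p < q" using pq by simp
  obtain L z where z: "p < z" "z < q" "DERIV f z :> L" "f q - f p = (q - p) * L"
    using MVT[OF lt c] d real_differentiable_def by blast
  have "L = f' z" using DERIV_unique[OF z(3) d[OF z(1,2)]] .
  then have "\<bar>f q - f p\<bar> = (q - p) * \<bar>f' z\<bar>" using z(4) lt by (simp add: abs_mult)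
  also have "\<dots> \<le> (q - p) * B" using b[OF z(1,2)] lt by (intro mult_left_mono) auto
  finally show ?thesis by (simp add: mult.commute)
qed

lemma lip_from_deriv:
  fixes f f' :: "real \<Rightarrow> real"
  assumes c: "continuous_on {0..} f"
    and d: "\<And>t. 0 < t \<Longrightarrow> (f has_real_derivative f' t) (at t)"
    and b: "\<And>t. 0 < t \<Longrightarrow> \<bar>f' t\<bar> \<le> B" and B: "B \<ge> 0"
  shows "B-lipschitz_on {0..} f"
proof (rule lipschitz_onI[OF _ B])
  have *: "\<bar>f q - f p\<bar> \<le> B * (q - p)" if "0 \<le> p" "p \<le> q" for p q
    by (rule mvt_bound[OF that(2)]) (use that in \<open>auto intro: continuous_on_subset[OF c] d b\<close>)
  fix x y :: real assume "x \<in> {0..}" "y \<in> {0..}"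
  then show "dist (f x) (f y) \<le> B * dist x y"
    using *[of x y] *[of y x] by (cases "x \<le> y") (auto simp: dist_real_def abs_minus_commute)
qed

lemma deriv_at_0:
  fixes f f' :: "real \<Rightarrow> real"
  assumes c: "continuous_on {0..} f"
    and d: "\<And>t. 0 < t \<Longrightarrow> (f has_real_derivative f' t) (at t)"
    and lim: "(f' \<longlongrightarrow> f' 0) (at_right 0)"
  shows "(f has_real_derivative f' 0) (at 0 within {0..})"
  unfolding has_field_derivative_iff at_within_Ici_at_right
proof (rule tendstoI)
  fix e :: real assume e: "e > 0"
  from tendstoD[OF lim e] obtain b where b: "b > 0" "\<And>y. 0 < y \<Longrightarrow> y < b \<Longrightarrow> dist (f' y) (f' 0) < e"
    unfolding eventually_at_right_field by auto
  have key: "dist ((f y - f 0) / (y - 0)) (f' 0) < e" if y: "0 < y" "y < b" for y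
  proof -
    obtain L z where z: "0 < z" "z < y" "DERIV f z :> L" "f y - f 0 = (y - 0) * L"
      using MVT[of 0 y f] y continuous_on_subset[OF c, of "{0..y}"] d real_differentiable_def by force
    have "L = f' z" using DERIV_unique[OF z(3) d[OF z(1)]] .
    then have "(f y - f 0) / (y - 0) = f' z" using z(4) y by simp
    then show ?thesis using b(2)[of z] z y by simp
  qed
  show "\<forall>\<^sub>F y in at_right 0. dist ((f y - f 0) / (y - 0)) (f' 0) < e"
    unfolding eventually_at_right_field using b key by blast
qed

lemma cont_from:
  fixes f :: "real \<Rightarrow> real"
  assumes "\<And>x. x > 0 \<Longrightarrow> isCont f x" "(f \<longlongrightarrow> f 0) (at_right 0)"
  shows "continuous_on {0..} f"
proof (clarsimp simp: continuous_on_eq_continuous_within)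
  fix x :: real assume "0 \<le> x"
  show "continuous (at x within {0..}) f"
  proof (cases "x = 0")
    case True then show ?thesis using assms(2) by (simp add: continuous_within at_within_Ici_at_right)
  next
    case False then show ?thesis using assms(1)[of x] \<open>0 \<le> x\<close> by (simp add: continuous_at_imp_continuous_within)
  qed
qed

lemma t_phi_le: "t \<ge> 0 \<Longrightarrow> t * phi t \<le> 1"
proof -
  assume t: "t \<ge> 0"
  have "t \<le> exp (t\<^sup>2/2)"
  proof -
    have "t \<le> 1 + t\<^sup>2/2" by (smt (verit) sum_squares_bound sum_power2_ge_zero field_sum_of_halves
        power2_diff[of t 1] zero_le_power2 mult_2_right one_power2 power_one)
    also have "\<dots> \<le> exp (t\<^sup>2/2)" by (rule exp_ge_add_one_self)
    finally show ?thesis .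
  qed
  moreover have "phi t \<le> exp (-(t\<^sup>2/2))"
    unfolding std_normal_density_def using pi_gt3
    by (simp add: divide_le_eq)
  ultimately have "t * phi t \<le> exp (t\<^sup>2/2) * exp (-(t\<^sup>2/2))"
    using t phi_pos[of t] by (intro mult_mono) auto
  then show ?thesis by (simp add: exp_minus)
qed

lemma t3_phi_le: "t \<ge> 0 \<Longrightarrow> t^3 * phi t \<le> 8"
proof -
  assume t: "t \<ge> 0"
  have y: "0 \<le> t\<^sup>2/2" by simp
  have e: "(t\<^sup>2/2)\<^sup>2/2 \<le> exp (t\<^sup>2/2)"
    using exp_lower_Taylor_quadratic[OF y] y by linarith
  have "t^3 \<le> 8 * exp (t\<^sup>2/2)"
  proof (cases "t \<le> 1")
    case True
    then have "t^3 \<le> 1" using t by (simp add: power_le_one)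
    also have "1 \<le> exp (t\<^sup>2/2)" by simp
    finally show ?thesis using exp_gt_zero[of "t\<^sup>2/2"] by linarith
  next
    case False
    then have "t^3 \<le> t^4" using t by (simp add: power_increasing)
    also have "t^4 = 8 * ((t\<^sup>2/2)\<^sup>2/2)" by (simp add: power2_eq_square eval_nat_numeral)
    also have "\<dots> \<le> 8 * exp (t\<^sup>2/2)" using e by simp
    finally show ?thesis .
  qed
  moreover have "phi t \<le> exp (-(t\<^sup>2/2))"
    unfolding std_normal_density_def using pi_gt3
    by (simp add: divide_le_eq)
  ultimately have "t^3 * phi t \<le> (8 * exp (t\<^sup>2/2)) * exp (-(t\<^sup>2/2))"
    using t phi_pos[of t] by (intro mult_mono) auto
  then show ?thesis by (simp add: exp_minus mult.assoc)
qed

context fixes l :: real assumes l: "l > 0"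
begin

definition "Dsm y = 2*l\<^sup>2*exp(l\<^sup>2*(y-1))*Phi(l*(1-2*y)/sqrt(2*y))"

lemma phi_identity: "x > 0 \<Longrightarrow> exp (l\<^sup>2*(x-1)) * phi (l*(1-2*x)/sqrt(2*x)) = phi (l/sqrt(2*x))"
proof -
  assume x: "x > 0"
  define sq where "sq = sqrt (2*x)"
  have sq: "sq > 0" "sq * sq = 2*x" using x by (auto simp: sq_def)
  have a: "l * (1 - 2 * x) / sq = -(l * sq - l/sq)"
    using sq by (simp add: field_simps)
  have "phi (l * sq - l / sq) > 0" by (rule phi_pos)
  then show ?thesis unfolding exp_repr[OF l x] sq_def[symmetric] a phi_minus by simp
qed

lemma Dsm_deriv0: "x > 0 \<Longrightarrow> (Dsm has_real_derivative
   2*l\<^sup>2*(exp(l\<^sup>2*(x-1))*l\<^sup>2 * Phi(l*(1-2*x)/sqrt(2*x))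
        + exp(l\<^sup>2*(x-1))*phi(l*(1-2*x)/sqrt(2*x))*(-(l/sqrt(2*x)) - l/(2*x* sqrt(2*x))))) (at x)"
  unfolding Dsm_def[abs_def]
  by (auto intro!: derivative_eq_intros simp: field_simps)

definition "Dd x = l\<^sup>2 * Dsm x - 2 * l^3 * phi (l / sqrt (2 * x)) * (1 / sqrt (2 * x) + 1 / (2 * x * sqrt (2 * x)))"

lemma Dsm_deriv: "x > 0 \<Longrightarrow> (Dsm has_real_derivative Dd x) (at x)"
proof -
  assume x: "x > 0"
  have "2 * l\<^sup>2 * (exp (l\<^sup>2 * (x - 1)) * l\<^sup>2 * Phi (l * (1 - 2 * x) / sqrt (2 * x))
        + exp (l\<^sup>2 * (x - 1)) * phi (l * (1 - 2 * x) / sqrt (2 * x)) * (- (l / sqrt (2 * x)) - l / (2 * x * sqrt (2 * x)))) = Dd x"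
    unfolding phi_identity[OF x] Dd_def Dsm_def using x by (simp add: field_simps power3_eq_cube power2_eq_square)
  then show ?thesis using Dsm_deriv0[OF x] by simp
qed

lemma D_eq: "y > 0 \<Longrightarrow> D_fun l y = Dsm y"
  by (simp add: D_fun_def Dsm_def)

lemma D_deriv: "x > 0 \<Longrightarrow> (D_fun l has_real_derivative Dd x) (at x)"
  by (rule has_field_derivative_transform_within_open[OF Dsm_deriv, of x "{0<..}"]) (auto simp: D_eq)

definition "Gd x = l\<^sup>2 * Dsm x - 2 * l^3 * phi (l / sqrt (2 * x)) / sqrt (2 * x)"

lemma G_eq: "y > 0 \<Longrightarrow> Gamma_fun l y = Dsm y + 2 * l\<^sup>2 * Phi (- l / sqrt (2 * y))"
  by (simp add: Gamma_fun_def D_eq)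

lemma G_deriv: "x > 0 \<Longrightarrow> (Gamma_fun l has_real_derivative Gd x) (at x)"
proof -
  assume x: "x > 0"
  have "((\<lambda>y. Dsm y + 2 * l\<^sup>2 * Phi (- l / sqrt (2 * y))) has_real_derivative
        Dd x + 2 * l\<^sup>2 * (phi (- l / sqrt (2 * x)) * (l / (2 * x * sqrt (2 * x))))) (at x)"
    using x by (auto intro!: derivative_eq_intros Dsm_deriv simp: field_simps)
  moreover have "Dd x + 2 * l\<^sup>2 * (phi (- l / sqrt (2 * x)) * (l / (2 * x * sqrt (2 * x)))) = Gd x"
    unfolding Dd_def Gd_def using x by (simp add: field_simps power3_eq_cube power2_eq_square)
  ultimately have "((\<lambda>y. Dsm y + 2 * l\<^sup>2 * Phi (- l / sqrt (2 * y))) has_real_derivative Gd x) (at x)"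
    by simp
  then show ?thesis
    by (rule has_field_derivative_transform_within_open[of _ _ x "{0<..}"]) (use x in \<open>auto simp: G_eq\<close>)
qed

definition "Ad x = D_fun l x * (l\<^sup>2 * (1 - 2 * x) - 2) + 2 * l^3 * sqrt (2 * x) * phi (l / sqrt (2 * x))"

lemma A_eq: "y > 0 \<Longrightarrow> A_fun l y = - 2 * y * D_fun l y + Gamma_fun l y"
  by (simp add: A_fun_def)

lemma A_deriv: "x > 0 \<Longrightarrow> (A_fun l has_real_derivative Ad x) (at x)"
proof -
  assume x: "x > 0"
  have "((\<lambda>y. - 2 * y * D_fun l y + Gamma_fun l y) has_real_derivative
        - 2 * D_fun l x - 2 * x * Dd x + Gd x) (at x)"
    using x by (auto intro!: derivative_eq_intros D_deriv G_deriv simp: field_simps)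
  moreover have "- 2 * D_fun l x - 2 * x * Dd x + Gd x = Ad x"
    unfolding Dd_def Gd_def Ad_def D_eq[OF x] using x by (simp add: field_simps power3_eq_cube power2_eq_square)
  ultimately have "((\<lambda>y. - 2 * y * D_fun l y + Gamma_fun l y) has_real_derivative Ad x) (at x)"
    by simp
  then show ?thesis
    by (rule has_field_derivative_transform_within_open[of _ _ x "{0<..}"]) (use x in \<open>auto simp: A_eq\<close>)
qed

end

context fixes l :: real assumes l: "l > 0"
begin

lemma D_pos: "x \<ge> 0 \<Longrightarrow> D_fun l x > 0"
  using l Phi_pos by (simp add: D_fun_def)


lemma phi_div_le: "\<bar>w\<bar> \<le> 1 \<Longrightarrow> phi u / phi w \<le> 3"
proof -
  assume w: "\<bar>w\<bar> \<le> 1"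
  have "phi u / phi w = exp (w\<^sup>2/2 - u\<^sup>2/2)"
    unfolding std_normal_density_def by (simp add: exp_diff[symmetric])
  also have "\<dots> \<le> exp 1"
  proof -
    have "w\<^sup>2 \<le> 1" using w by (simp add: abs_square_le_1) 
    then have "w\<^sup>2/2 - u\<^sup>2/2 \<le> 1" using zero_le_power2[of u] by linarith
    then show ?thesis by simp
  qed
  also have "exp 1 \<le> (3::real)" using exp_le by simp
  finally show ?thesis .
qed

lemma D_le: "x \<ge> 0 \<Longrightarrow> D_fun l x \<le> 6 * l\<^sup>2"
proof -
  assume x: "x \<ge> 0"
  show ?thesis
  proof (cases "x \<le> 1")
    case True
    have "D_fun l x \<le> 2 * l\<^sup>2"
    proof (cases "x = 0")
      case True then show ?thesis using l by (simp add: D_fun_def)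
    next
      case False
      have "exp (l\<^sup>2 * (x - 1)) \<le> 1" using \<open>x \<le> 1\<close> l by (simp add: mult_nonneg_nonpos)
      moreover have "Phi (l * (1 - 2 * x) / sqrt (2 * x)) \<le> 1" using Phi_lt1 less_imp_le by blast
      ultimately have "exp (l\<^sup>2 * (x - 1)) * Phi (l * (1 - 2 * x) / sqrt (2 * x)) \<le> 1 * 1"
        by (intro mult_mono) (auto intro: less_imp_le Phi_pos)
      then show ?thesis using False l by (simp add: D_fun_def mult.assoc)
    qed
    then show ?thesis using zero_le_power2[of l] by linarith
  next
    case False
    then have x0: "x > 0" by simp
    define sq where "sq = sqrt (2*x)"
    define w where "w = l * sq - l / sq"
    have sq: "sq > 1" "sq * sq = 2*x" using False by (auto simp: sq_def real_less_rsqrt)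
    have w: "w > 0" unfolding w_def using sq l False by (simp add: field_simps)
    have "phi (l/sq) * (Phi (-w) / phi w) \<le> 3"
    proof (cases "w \<ge> 1")
      case True
      have "Phi (-w) < phi w / w" by (rule mills_upper[OF w])
      also have "\<dots> \<le> phi w" using True phi_pos[of w] by (simp add: divide_le_eq)
      finally have "Phi (-w) / phi w \<le> 1" using phi_pos[of w] by simp
      moreover have "phi (l/sq) \<le> 1" by (rule phi_le)
      moreover have "0 \<le> Phi (-w) / phi w" using Phi_pos[of "-w"] phi_pos[of w] by simp
      ultimately have "phi (l/sq) * (Phi (-w) / phi w) \<le> 1 * 1"
        by (intro mult_mono) auto
      then show ?thesis by simp
    next
      case False
      have "phi (l/sq) * (Phi (-w) / phi w) = (phi (l/sq) / phi w) * Phi (-w)" by simp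
      also have "\<dots> \<le> 3 * 1"
        using phi_div_le[of w "l/sq"] False w Phi_lt1[of "-w"]
        by (intro mult_mono) (auto intro: less_imp_le phi_pos Phi_pos)
      finally show ?thesis by simp
    qed
    then have "2 * l\<^sup>2 * (phi (l/sq) * (Phi (-w) / phi w)) \<le> 2 * l\<^sup>2 * 3"
      by (intro mult_left_mono) auto
    then show ?thesis unfolding D_repr[OF l x0] sq_def[symmetric] w_def[symmetric] by (simp add: mult.assoc)
  qed
qed

lemma phi_over_sq: "sq > 0 \<Longrightarrow> phi (l/sq) / sq \<le> 1 / l"
proof -
  assume sq: "sq > 0"
  have "phi (l/sq) / sq = ((l/sq) * phi (l/sq)) / l" using sq l by (simp add: field_simps)
  also have "\<dots> \<le> 1 / l" using t_phi_le[of "l/sq"] sq l by (intro divide_right_mono) auto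
  finally show ?thesis .
qed

lemma phi_over_sq3: "sq > 0 \<Longrightarrow> phi (l/sq) / (sq * sq * sq) \<le> 8 / l^3"
proof -
  assume sq: "sq > 0"
  have "phi (l/sq) / (sq * sq * sq) = ((l/sq)^3 * phi (l/sq)) / l^3" using sq l
    by (simp add: field_simps power3_eq_cube)
  also have "\<dots> \<le> 8 / l^3" using t3_phi_le[of "l/sq"] sq l by (intro divide_right_mono) auto
  finally show ?thesis .
qed

lemma Dsm_eq: "x > 0 \<Longrightarrow> Dsm l x = D_fun l x" using D_eq[OF l] by simp

lemma Dd_bound: "x > 0 \<Longrightarrow> \<bar>Dd l x\<bar> \<le> 6 * l^4 + 2 * l\<^sup>2 + 16"
proof -
  assume x: "x > 0"
  define sq where "sq = sqrt (2*x)"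
  define P where "P = phi (l/sq)"
  have sq: "sq > 0" "2 * x * sq = sq * sq * sq" using x by (auto simp: sq_def)
  have P: "P > 0" "P / sq \<le> 1/l" "P / (sq * sq * sq) \<le> 8 / l^3"
    unfolding P_def using phi_pos phi_over_sq[OF sq(1)] phi_over_sq3[OF sq(1)] by auto
  have Dd: "Dd l x = l\<^sup>2 * D_fun l x - 2 * l^3 * (P / sq + P / (sq * sq * sq))"
    unfolding Dd_def[OF l] Dsm_eq[OF x] sq_def[symmetric] P_def[symmetric] sq(2)
    by (simp add: field_simps)
  have D: "0 < D_fun l x" "D_fun l x \<le> 6 * l\<^sup>2" using D_pos D_le x by auto
  have t1: "0 \<le> l\<^sup>2 * D_fun l x" "l\<^sup>2 * D_fun l x \<le> l\<^sup>2 * (6 * l\<^sup>2)"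
    using D by (auto intro: mult_left_mono)
  have t2: "0 \<le> 2 * l^3 * (P / sq + P / (sq * sq * sq))" using P sq l by auto
  have "2 * l^3 * (P / sq + P / (sq * sq * sq)) \<le> 2 * l^3 * (1/l + 8/l^3)"
    using P l by (intro mult_left_mono) auto
  also have "\<dots> = 2 * l\<^sup>2 + 16" using l by (simp add: field_simps power3_eq_cube power2_eq_square)
  finally have t3: "2 * l^3 * (P / sq + P / (sq * sq * sq)) \<le> 2 * l\<^sup>2 + 16" .
  have "l\<^sup>2 * (6 * l\<^sup>2) = 6 * l^4" by (simp add: power2_eq_square power4_eq_xxxx)
  then show ?thesis unfolding Dd using t1 t2 t3 by linarith
qed

lemma Gd_bound: "x > 0 \<Longrightarrow> \<bar>Gd l x\<bar> \<le> 6 * l^4 + 2 * l\<^sup>2"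
proof -
  assume x: "x > 0"
  define sq where "sq = sqrt (2*x)"
  define P where "P = phi (l/sq)"
  have sq: "sq > 0" using x by (auto simp: sq_def)
  have P: "P > 0" "P / sq \<le> 1/l"
    unfolding P_def using phi_pos phi_over_sq[OF sq(1)] by auto
  have Gd: "Gd l x = l\<^sup>2 * D_fun l x - 2 * l^3 * (P / sq)"
    unfolding Gd_def[OF l] Dsm_eq[OF x] sq_def[symmetric] P_def[symmetric] by simp
  have D: "0 < D_fun l x" "D_fun l x \<le> 6 * l\<^sup>2" using D_pos D_le x by auto
  have t1: "0 \<le> l\<^sup>2 * D_fun l x" "l\<^sup>2 * D_fun l x \<le> l\<^sup>2 * (6 * l\<^sup>2)"
    using D by (auto intro: mult_left_mono)
  have t2: "0 \<le> 2 * l^3 * (P / sq)" using P sq l by auto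
  have "2 * l^3 * (P / sq) \<le> 2 * l^3 * (1/l)"
    using P l by (intro mult_left_mono) auto
  also have "\<dots> = 2 * l\<^sup>2" using l by (simp add: field_simps power3_eq_cube power2_eq_square)
  finally have t3: "2 * l^3 * (P / sq) \<le> 2 * l\<^sup>2" .
  have "l\<^sup>2 * (6 * l\<^sup>2) = 6 * l^4" by (simp add: power2_eq_square power4_eq_xxxx)
  then show ?thesis unfolding Gd using t1 t2 t3 by linarith
qed

lemma sqrt_le_1x: "x \<ge> 0 \<Longrightarrow> sqrt (2 * x) \<le> 1 + x"
  by (rule real_le_lsqrt) (auto simp: power2_eq_square algebra_simps)
   
lemma Ad_bound: "x > 0 \<Longrightarrow> \<bar>Ad l x\<bar> \<le> (12 * l\<^sup>2 * (l\<^sup>2 + 1) + 2 * l^3) * (1 + x)"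
proof -
  assume x: "x > 0"
  have D: "0 < D_fun l x" "D_fun l x \<le> 6 * l\<^sup>2" using D_pos D_le x by auto
  have f: "\<bar>l\<^sup>2 * (1 - 2 * x) - 2\<bar> \<le> (2 * l\<^sup>2 + 2) * (1 + x)"
    using x zero_le_power2[of l] by (simp add: abs_le_iff algebra_simps)
  have "\<bar>D_fun l x * (l\<^sup>2 * (1 - 2 * x) - 2)\<bar> = D_fun l x * \<bar>l\<^sup>2 * (1 - 2 * x) - 2\<bar>"
    using D by (simp add: abs_mult)
  also have "\<dots> \<le> (6 * l\<^sup>2) * ((2 * l\<^sup>2 + 2) * (1 + x))"
    using D f by (intro mult_mono) auto
  finally have t1: "\<bar>D_fun l x * (l\<^sup>2 * (1 - 2 * x) - 2)\<bar> \<le> 12 * l\<^sup>2 * (l\<^sup>2 + 1) * (1 + x)"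
    by (simp add: algebra_simps)
  have "\<bar>2 * l^3 * sqrt (2 * x) * phi (l / sqrt (2 * x))\<bar> = 2 * l^3 * sqrt (2 * x) * phi (l / sqrt (2 * x))"
    using l x phi_pos by (simp add: abs_mult)
  also have "\<dots> \<le> 2 * l^3 * (1 + x) * 1"
    using l x phi_le sqrt_le_1x[of x] by (intro mult_mono) auto
  finally have t2: "\<bar>2 * l^3 * sqrt (2 * x) * phi (l / sqrt (2 * x))\<bar> \<le> 2 * l^3 * (1 + x)" by simp
  show ?thesis unfolding Ad_def[OF l] using t1 t2 by (simp add: algebra_simps)
qed

lemma G_le: "x \<ge> 0 \<Longrightarrow> Gamma_fun l x \<le> 8 * l\<^sup>2"
proof (cases "x = 0")
  case True
  have "exp (- l\<^sup>2) \<le> 1" by simp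
  then have "2 * l\<^sup>2 * exp (- l\<^sup>2) \<le> 2 * l\<^sup>2 * 1" by (intro mult_left_mono) auto
  then show ?thesis using True by (simp add: Gamma_fun_def) (use zero_le_power2[of l] in linarith)
next
  case False
  assume "x \<ge> 0"
  then have "D_fun l x \<le> 6 * l\<^sup>2" by (rule D_le)
  moreover have "2 * l\<^sup>2 * Phi (- l / sqrt (2 * x)) \<le> 2 * l\<^sup>2 * 1"
    using Phi_lt1 by (intro mult_left_mono) (auto intro: less_imp_le)
  ultimately show ?thesis using False by (simp add: Gamma_fun_def)
qed

lemma G_lb: "x \<ge> 0 \<Longrightarrow> Gamma_fun l x \<ge> 2 * l\<^sup>2 * exp (- l\<^sup>2) * Phi (- l)"
proof -
  assume x: "x \<ge> 0"
  have c: "2 * l\<^sup>2 * exp (- l\<^sup>2) * Phi (- l) \<le> 2 * l\<^sup>2 * exp (- l\<^sup>2)"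
    using Phi_lt1[of "-l"] l by (simp add: less_imp_le)
  show ?thesis
  proof (cases "x = 0")
    case True then show ?thesis using c by (simp add: Gamma_fun_def)
  next
    case False
    then have x0: "x > 0" using x by simp
    define sq where "sq = sqrt (2*x)"
    have sq: "sq > 0" "sq * sq = 2*x" using x0 by (auto simp: sq_def)
    have G: "Gamma_fun l x = D_fun l x + 2 * l\<^sup>2 * Phi (- l / sq)"
      using x0 by (simp add: Gamma_fun_def sq_def)
    have Phipos: "2 * l\<^sup>2 * Phi (- l / sq) > 0" using l Phi_pos by simp
    show ?thesis
    proof (cases "x \<le> 1")
      case True
      have a: "- l \<le> l * (1 - 2 * x) / sq"
      proof -
        have "sq * sq \<le> 2" using sq True by simp
        have "sq * sq - 1 \<le> sq"
        proof (cases "sq \<le> 1")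
          case True then have "sq * sq \<le> 1" using sq(1) by (simp add: mult_le_one)
          then show ?thesis using sq(1) by linarith
        next
          case False then show ?thesis using \<open>sq * sq \<le> 2\<close> by linarith
        qed
        then have "-(1 - 2*x) \<le> sq" using sq by simp
        then have "l * (-(1 - 2*x)) \<le> l * sq" using l by (intro mult_left_mono) auto
        then have "- l * sq \<le> l * (1 - 2 * x)" by (simp add: algebra_simps)
        then show ?thesis using sq by (simp add: field_simps)
      qed
      have "2 * l\<^sup>2 * exp (- l\<^sup>2) * Phi (- l) \<le> 2 * l\<^sup>2 * exp (l\<^sup>2 * (x - 1)) * Phi (l * (1 - 2 * x) / sq)"
      proof (intro mult_mono)
        show "exp (- l\<^sup>2) \<le> exp (l\<^sup>2 * (x - 1))" using x zero_le_power2[of l]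
          by (simp add: algebra_simps)
      qed (use Phi_le[OF a] Phi_pos in \<open>auto intro: less_imp_le\<close>)
      also have "\<dots> = D_fun l x" using x0 by (simp add: D_fun_def sq_def)
      finally show ?thesis using G Phipos by linarith
    next
      case False
      have "sq \<ge> 1"
      proof (rule ccontr)
        assume "\<not> 1 \<le> sq"
        then have "sq * sq \<le> 1" using sq(1) by (simp add: mult_le_one)
        then show False using False sq(2) by linarith
      qed
      then have "- l \<le> - l / sq" using l sq by (simp add: field_simps)
      then have "2 * l\<^sup>2 * Phi (- l) \<le> 2 * l\<^sup>2 * Phi (- l / sq)"
        using Phi_le by (intro mult_left_mono) auto
      moreover have "2 * l\<^sup>2 * exp (- l\<^sup>2) * Phi (- l) \<le> 2 * l\<^sup>2 * Phi (- l)"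
        using l Phi_pos[of "-l"] by (simp add: mult_le_cancel_left1 less_imp_le)
      ultimately show ?thesis using G D_pos[OF x] by linarith
    qed
  qed
qed

end

context fixes l :: real assumes l: "l > 0"
begin

lemma lim_arg: "filterlim (\<lambda>y. l * (1 - 2 * y) / sqrt (2 * y)) at_top (at_right 0)"
proof -
  have "filterlim (\<lambda>y::real. (1 - 2 * y) / sqrt (2 * y)) at_top (at_right 0)" by real_asymp
  from filterlim_tendsto_pos_mult_at_top[OF tendsto_const l this]
  show ?thesis by (simp add: mult.assoc)
qed

lemma lim_b: "filterlim (\<lambda>y. l / sqrt (2 * y)) at_top (at_right 0)"
proof -
  have "filterlim (\<lambda>y::real. 1 / sqrt (2 * y)) at_top (at_right 0)" by real_asymp
  from filterlim_tendsto_pos_mult_at_top[OF tendsto_const l this]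
  show ?thesis by simp
qed

lemma ev_pos: "\<forall>\<^sub>F y in at_right (0::real). y > 0"
  by (simp add: eventually_at_right_less)

lemma lim_D: "(D_fun l \<longlongrightarrow> D_fun l 0) (at_right 0)"
proof -
  have "((\<lambda>y. 2 * l\<^sup>2 * exp (l\<^sup>2 * (y - 1)) * Phi (l * (1 - 2 * y) / sqrt (2 * y)))
         \<longlongrightarrow> 2 * l\<^sup>2 * exp (l\<^sup>2 * (0 - 1)) * 1) (at_right 0)"
    by (intro tendsto_intros filterlim_compose[OF Phi_at_top lim_arg])
  then have "((\<lambda>y. 2 * l\<^sup>2 * exp (l\<^sup>2 * (y - 1)) * Phi (l * (1 - 2 * y) / sqrt (2 * y)))
         \<longlongrightarrow> D_fun l 0) (at_right 0)" by (simp add: D_fun_def)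
  then show ?thesis
    by (rule Lim_transform_eventually) (use ev_pos in \<open>eventually_elim, simp add: D_fun_def\<close>)
qed

lemma lim_Phib: "((\<lambda>y. Phi (- l / sqrt (2 * y))) \<longlongrightarrow> 0) (at_right 0)"
proof -
  have "filterlim (\<lambda>y. - (l / sqrt (2 * y))) at_bot (at_right 0)"
    by (rule filterlim_compose[OF filterlim_uminus_at_bot_at_top lim_b])
  from filterlim_compose[OF Phi_at_bot this] show ?thesis by simp
qed

lemma lim_G: "(Gamma_fun l \<longlongrightarrow> Gamma_fun l 0) (at_right 0)"
proof -
  have "((\<lambda>y. D_fun l y + 2 * l\<^sup>2 * Phi (- l / sqrt (2 * y))) \<longlongrightarrow> D_fun l 0 + 2 * l\<^sup>2 * 0) (at_right 0)"
    by (intro tendsto_intros lim_D lim_Phib)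
  then have "((\<lambda>y. D_fun l y + 2 * l\<^sup>2 * Phi (- l / sqrt (2 * y))) \<longlongrightarrow> Gamma_fun l 0) (at_right 0)"
    by (simp add: D_fun_def Gamma_fun_def)
  then show ?thesis
    by (rule Lim_transform_eventually) (use ev_pos in \<open>eventually_elim, simp add: Gamma_fun_def\<close>)
qed

lemma lim_A: "(A_fun l \<longlongrightarrow> A_fun l 0) (at_right 0)"
proof -
  have "((\<lambda>y. - 2 * y * D_fun l y + Gamma_fun l y) \<longlongrightarrow> - 2 * 0 * D_fun l 0 + Gamma_fun l 0) (at_right 0)"
    by (intro tendsto_intros lim_D lim_G)
  then have "((\<lambda>y. - 2 * y * D_fun l y + Gamma_fun l y) \<longlongrightarrow> A_fun l 0) (at_right 0)"
    by (simp add: A_fun_def Gamma_fun_def)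
  then show ?thesis
    by (rule Lim_transform_eventually) (use ev_pos in \<open>eventually_elim, simp add: A_fun_def\<close>)
qed

lemma lim_sqrtG: "((\<lambda>x. sqrt (Gamma_fun l x)) \<longlongrightarrow> sqrt (Gamma_fun l 0)) (at_right 0)"
  by (intro tendsto_intros lim_G)

lemma lim_Ad: "(Ad l \<longlongrightarrow> Ad l 0) (at_right 0)"
proof -
  have z: "((\<lambda>y. 2 * l^3 * sqrt (2 * y) * phi (l / sqrt (2 * y))) \<longlongrightarrow> 0) (at_right 0)"
  proof (rule tendsto_sandwich[of "\<lambda>_. 0" _ _ "\<lambda>y. 2 * l^3 * sqrt (2 * y)"])
    show "\<forall>\<^sub>F n in at_right 0. 0 \<le> 2 * l^3 * sqrt (2 * n) * phi (l / sqrt (2 * n))"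
      using ev_pos by eventually_elim (use l phi_pos in \<open>auto intro!: mult_nonneg_nonneg less_imp_le\<close>)
    show "\<forall>\<^sub>F n in at_right 0. 2 * l^3 * sqrt (2 * n) * phi (l / sqrt (2 * n)) \<le> 2 * l^3 * sqrt (2 * n)"
      using ev_pos by eventually_elim (use l phi_le in \<open>auto intro!: mult_left_le\<close>)
    have "((\<lambda>y. 2 * l^3 * sqrt (2 * y)) \<longlongrightarrow> 2 * l^3 * sqrt (2 * 0)) (at_right 0)"
      by (intro tendsto_intros)
    then show "((\<lambda>y. 2 * l^3 * sqrt (2 * y)) \<longlongrightarrow> 0) (at_right 0)" by simp
  qed simp
  have "((\<lambda>y. D_fun l y * (l\<^sup>2 * (1 - 2 * y) - 2) + 2 * l^3 * sqrt (2 * y) * phi (l / sqrt (2 * y)))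
          \<longlongrightarrow> D_fun l 0 * (l\<^sup>2 * (1 - 2 * 0) - 2) + 0) (at_right 0)"
    by (intro tendsto_intros lim_D z)
  then show ?thesis unfolding Ad_def[OF l, abs_def] by (simp add: Ad_def[OF l])
qed

lemma isCont_D: "x > 0 \<Longrightarrow> isCont (D_fun l) x"
  using D_deriv[OF l] DERIV_isCont by blast
lemma isCont_G: "x > 0 \<Longrightarrow> isCont (Gamma_fun l) x"
  using G_deriv[OF l] DERIV_isCont by blast
lemma isCont_A: "x > 0 \<Longrightarrow> isCont (A_fun l) x"
  using A_deriv[OF l] DERIV_isCont by blast
lemma isCont_sqrtG: "x > 0 \<Longrightarrow> isCont (\<lambda>x. sqrt (Gamma_fun l x)) x"
  using isCont_G by (intro continuous_intros)
lemma isCont_Ad: "x > 0 \<Longrightarrow> isCont (Ad l) x"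
  unfolding Ad_def[OF l, abs_def] std_normal_density_def
  using isCont_D by (intro continuous_intros) auto

lemma cont_D: "continuous_on {0..} (D_fun l)" by (rule cont_from[OF isCont_D lim_D])
lemma cont_G: "continuous_on {0..} (Gamma_fun l)" by (rule cont_from[OF isCont_G lim_G])
lemma cont_sqrtG: "continuous_on {0..} (\<lambda>x. sqrt (Gamma_fun l x))" by (rule cont_from[OF isCont_sqrtG lim_sqrtG])
lemma cont_A: "continuous_on {0..} (A_fun l)" by (rule cont_from[OF isCont_A lim_A])
lemma cont_Ad: "continuous_on {0..} (Ad l)" by (rule cont_from[OF isCont_Ad lim_Ad])

lemma A_deriv_within: "x \<ge> 0 \<Longrightarrow> (A_fun l has_real_derivative Ad l x) (at x within {0..})"
proof (cases "x = 0")
  case True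
  then show ?thesis using deriv_at_0[OF cont_A A_deriv[OF l] lim_Ad] by simp
next
  case False
  assume "x \<ge> 0"
  with False have "x > 0" by simp
  then show ?thesis using A_deriv[OF l] has_field_derivative_at_within by blast
qed

end

context fixes l :: real assumes l: "l > 0"
begin

lemma lip_D: "(6 * l^4 + 2 * l\<^sup>2 + 16)-lipschitz_on {0..} (D_fun l)"
  by (rule lip_from_deriv[OF cont_D[OF l] D_deriv[OF l] Dd_bound[OF l]]) auto

lemma lip_G: "(6 * l^4 + 2 * l\<^sup>2)-lipschitz_on {0..} (Gamma_fun l)"
  by (rule lip_from_deriv[OF cont_G[OF l] G_deriv[OF l] Gd_bound[OF l]]) auto

definition "cG = 2 * l\<^sup>2 * exp (- l\<^sup>2) * Phi (- l)"

lemma cG_pos: "cG > 0" unfolding cG_def using l Phi_pos by simp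

lemma G_ge: "x \<ge> 0 \<Longrightarrow> Gamma_fun l x \<ge> cG" unfolding cG_def by (rule G_lb[OF l])

lemma lip_sqrtG: "((6 * l^4 + 2 * l\<^sup>2) / (2 * sqrt cG))-lipschitz_on {0..} (\<lambda>x. sqrt (Gamma_fun l x))"
proof (rule lip_from_deriv[OF cont_sqrtG[OF l], where f' = "\<lambda>x. inverse (sqrt (Gamma_fun l x)) / 2 * Gd l x"])
  fix t :: real assume t: "t > 0"
  have Gp: "Gamma_fun l t > 0" using G_ge[of t] cG_pos t by simp
  show "((\<lambda>x. sqrt (Gamma_fun l x)) has_real_derivative inverse (sqrt (Gamma_fun l t)) / 2 * Gd l t) (at t)"
    by (rule DERIV_chain2[OF DERIV_real_sqrt[OF Gp] G_deriv[OF l t]])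
  have s: "sqrt cG \<le> sqrt (Gamma_fun l t)" using G_ge[of t] t by simp
  have sp: "sqrt cG > 0" using cG_pos by simp
  have "\<bar>inverse (sqrt (Gamma_fun l t)) / 2 * Gd l t\<bar> = \<bar>Gd l t\<bar> / (2 * sqrt (Gamma_fun l t))"
    using Gp by (simp add: abs_mult field_simps)
  also have "\<dots> \<le> (6 * l^4 + 2 * l\<^sup>2) / (2 * sqrt cG)"
    using Gd_bound[OF l t] s sp by (intro frac_le) auto
  finally show "\<bar>inverse (sqrt (Gamma_fun l t)) / 2 * Gd l t\<bar> \<le> (6 * l^4 + 2 * l\<^sup>2) / (2 * sqrt cG)" .
qed (use cG_pos in auto)

lemma A_abs: "x \<ge> 0 \<Longrightarrow> \<bar>A_fun l x\<bar> \<le> 12 * l\<^sup>2 * (1 + x)"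
proof (cases "x = 0")
  case True
  have "exp (- l\<^sup>2) \<le> 1" by simp
  then have "2 * l\<^sup>2 * exp (- l\<^sup>2) \<le> 2 * l\<^sup>2 * 1" by (intro mult_left_mono) auto
  then show ?thesis using True by (simp add: A_fun_def) (use zero_le_power2[of l] in linarith)
next
  case False
  assume x: "x \<ge> 0"
  then have x0: "x > 0" using False by simp
  have D: "0 < D_fun l x" "D_fun l x \<le> 6 * l\<^sup>2" using D_pos[OF l] D_le[OF l] x by auto
  have G: "0 < Gamma_fun l x" "Gamma_fun l x \<le> 8 * l\<^sup>2" using G_ge[OF x] cG_pos G_le[OF l x] by auto
  have "x * D_fun l x \<le> x * (6 * l\<^sup>2)" using D x by (intro mult_left_mono) auto
  moreover have "0 \<le> x * D_fun l x" using D x by simp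
  moreover have "- 2 * x * D_fun l x + Gamma_fun l x = Gamma_fun l x - 2 * (x * D_fun l x)" by simp
  moreover have "12 * l\<^sup>2 * (1 + x) = 12 * l\<^sup>2 + 12 * (x * l\<^sup>2)" by (simp add: algebra_simps)
  moreover have "x * (6 * l\<^sup>2) = 6 * (x * l\<^sup>2)" by simp
  moreover have "0 \<le> x * l\<^sup>2" using x by simp
  ultimately show ?thesis using G zero_le_power2[of l] unfolding A_eq[OF l x0] abs_le_iff
    by linarith
qed

definition "KA = 12 * l\<^sup>2 * (l\<^sup>2 + 1) + 2 * l^3"

lemma KA_nonneg: "KA \<ge> 0" unfolding KA_def using l by simp

lemma A_mvt: "0 \<le> p \<Longrightarrow> p \<le> q \<Longrightarrow> \<bar>A_fun l q - A_fun l p\<bar> \<le> KA * (1 + q) * (q - p)"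
proof -
  assume p: "0 \<le> p" and pq: "p \<le> q"
  have c: "continuous_on {p..q} (A_fun l)"
    by (rule continuous_on_subset[OF cont_A[OF l]]) (use p in auto)
  have d: "(A_fun l has_real_derivative Ad l t) (at t)" if "p < t" "t < q" for t
    using A_deriv[OF l] p that by simp
  have b: "\<bar>Ad l t\<bar> \<le> KA * (1 + q)" if "p < t" "t < q" for t
  proof -
    have "\<bar>Ad l t\<bar> \<le> KA * (1 + t)" using Ad_bound[OF l, of t] p that by (simp add: KA_def)
    also have "\<dots> \<le> KA * (1 + q)" using KA_nonneg that by (intro mult_left_mono) auto
    finally show ?thesis .
  qed
  show ?thesis by (rule mvt_bound[OF pq c d b])
qed

lemma A_K: "\<bar>A_fun l x - A_fun l y\<bar> \<le> (2 * KA + 48 * l\<^sup>2) * (1 + \<bar>x\<bar>) * \<bar>y - x\<bar>"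
  if x: "x \<ge> 0" and y: "y \<ge> 0"
proof (cases "y \<le> 2 * x + 1")
  case True
  have "\<bar>A_fun l x - A_fun l y\<bar> \<le> KA * (1 + max x y) * \<bar>y - x\<bar>"
    using A_mvt[of x y] A_mvt[of y x] x y
    by (cases "x \<le> y") (auto simp: abs_minus_commute max_def)
  also have "\<dots> \<le> (2 * KA) * (1 + \<bar>x\<bar>) * \<bar>y - x\<bar>"
  proof -
    have "KA * (1 + max x y) \<le> KA * (2 * (1 + \<bar>x\<bar>))" using True x y KA_nonneg
      by (intro mult_left_mono) auto
    then show ?thesis by (intro mult_right_mono) (auto simp: algebra_simps)
  qed
  also have "\<dots> \<le> (2 * KA + 48 * l\<^sup>2) * (1 + \<bar>x\<bar>) * \<bar>y - x\<bar>"
    by (intro mult_right_mono) (auto simp: algebra_simps)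
  finally show ?thesis .
next
  case False
  have "\<bar>A_fun l x - A_fun l y\<bar> \<le> 12 * l\<^sup>2 * (1 + x) + 12 * l\<^sup>2 * (1 + y)"
    using A_abs[OF x] A_abs[OF y] by linarith
  also have "\<dots> = 12 * l\<^sup>2 * (2 + x + y)" by (simp add: algebra_simps)
  also have "\<dots> \<le> 12 * l\<^sup>2 * (4 * (y - x))"
    using False x by (intro mult_left_mono) auto
  also have "\<dots> = 48 * l\<^sup>2 * (y - x)" by simp
  also have "\<dots> \<le> 48 * l\<^sup>2 * (1 + \<bar>x\<bar>) * \<bar>y - x\<bar>"
    using False x by (simp add: mult_le_cancel_left1 mult.assoc mult_left_mono)
  also have "\<dots> \<le> (2 * KA + 48 * l\<^sup>2) * (1 + \<bar>x\<bar>) * \<bar>y - x\<bar>"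
    using KA_nonneg by (intro mult_right_mono) auto
  finally show ?thesis .
qed

end

context fixes l :: real assumes l: "l > 0"
begin

lemma phi_anti: "0 \<le> a \<Longrightarrow> a \<le> b \<Longrightarrow> phi b \<le> phi a"
  unfolding std_normal_density_def by (intro mult_left_mono) (auto intro: power_mono)

lemma A_upper_large:
  assumes sq2: "sq \<ge> 2" and lsq: "l * sq \<ge> 2"
  shows "A_fun l (sq * sq / 2) \<le> - (l * phi l * sq) + 8 * l\<^sup>2"
proof -
  define x where "x = sq * sq / 2"
  have sq: "sq > 0" using sq2 by simp
  have x0: "x > 0" using sq by (simp add: x_def)
  have sqx: "sqrt (2 * x) = sq" using sq by (simp add: x_def real_sqrt_mult_self)
  define w where "w = l * sq - l / sq"
  have "l / sq \<le> l * sq / 2"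
  proof -
    have "2 * 2 \<le> sq * sq" using sq2 by (intro mult_mono) auto
    then have "2 \<le> sq * sq" by linarith
    then show ?thesis using l sq by (simp add: field_simps)
  qed
  then have w1: "w \<ge> l * sq / 2" unfolding w_def by simp
  then have w: "w \<ge> 1" using lsq by simp
  have wle: "w \<le> l * sq" unfolding w_def using l sq by simp
  have M: "Phi (-w) / phi w \<ge> 1 / (2 * (l * sq))"
  proof -
    have "1 / (2 * (l * sq)) \<le> 1 / (2 * w)" using w wle l sq by (intro divide_left_mono) (auto intro!: mult_pos_pos)
    also have "\<dots> \<le> w / (1 + w\<^sup>2)"
    proof -
      have "1 * 1 \<le> w * w" using w by (intro mult_mono) auto
      then have "1 + w\<^sup>2 \<le> 2 * w * w" by (simp add: power2_eq_square)
      moreover have "1 + w\<^sup>2 > 0" by (simp add: add_pos_nonneg)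
      ultimately show ?thesis using w by (simp add: field_simps)
    qed
    also have "\<dots> \<le> Phi (-w) / phi w"
      using mills_lower[of w] w phi_pos[of w] by (simp add: field_simps)
    finally show ?thesis .
  qed
  have P: "phi l \<le> phi (l / sq)" using l sq sq2 by (intro phi_anti) (auto simp: field_simps)
  have "l * phi l / sq = 2 * l\<^sup>2 * phi l * (1 / (2 * (l * sq)))" using l sq
    by (simp add: field_simps power2_eq_square)
  also have "\<dots> \<le> 2 * l\<^sup>2 * phi (l / sq) * (Phi (-w) / phi w)"
    using P M l sq phi_pos by (intro mult_mono) (auto intro: less_imp_le)
  also have "\<dots> = D_fun l x"
    using D_repr[OF l x0] unfolding sqx w_def by (simp add: mult.assoc)
  finally have D: "l * phi l / sq \<le> D_fun l x" .
  have "A_fun l x = - (sq * sq) * D_fun l x + Gamma_fun l x"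
    using A_eq[OF l x0] by (simp add: x_def)
  also have "\<dots> \<le> - (sq * sq) * (l * phi l / sq) + 8 * l\<^sup>2"
  proof -
    have "(sq * sq) * (l * phi l / sq) \<le> (sq * sq) * D_fun l x" using D by (intro mult_left_mono) auto
    then show ?thesis using G_le[OF l, of x] x0 by simp
  qed
  also have "- (sq * sq) * (l * phi l / sq) = - (l * phi l * sq)" using sq by (simp add: field_simps)
  finally show ?thesis by (simp add: x_def)
qed

lemma A_unbdd: "\<not> bdd_below (A_fun l ` {0..})"
proof
  assume "bdd_below (A_fun l ` {0..})"
  then obtain m where m: "\<And>x. x \<ge> 0 \<Longrightarrow> m \<le> A_fun l x" by (auto simp: bdd_below_def)
  define c where "c = l * phi l"
  have c: "c > 0" using l phi_pos by (simp add: c_def)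
  define sq where "sq = max 2 (2 / l) + \<bar>8 * l\<^sup>2 - m\<bar> / c + 1"
  have nn: "0 \<le> \<bar>8 * l\<^sup>2 - m\<bar> / c" using c by simp
  have sq2: "sq \<ge> 2" unfolding sq_def using nn max.cobounded1[of 2 "2/l"] by linarith
  have sql: "sq \<ge> 2 / l" unfolding sq_def using nn max.cobounded2[of 2 "2/l"] by linarith
  have lsq: "l * sq \<ge> 2" using sql l by (simp add: field_simps)
  have "c * sq \<ge> c * (\<bar>8 * l\<^sup>2 - m\<bar> / c + 1)"
    using c unfolding sq_def by (intro mult_left_mono) auto
  also have "c * (\<bar>8 * l\<^sup>2 - m\<bar> / c + 1) = \<bar>8 * l\<^sup>2 - m\<bar> + c" using c by (simp add: field_simps)
  finally have big: "c * sq > 8 * l\<^sup>2 - m" using c by linarith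
  have "A_fun l (sq * sq / 2) \<le> - (c * sq) + 8 * l\<^sup>2"
    using A_upper_large[OF sq2 lsq] by (simp add: c_def)
  also have "\<dots> < m" using big by linarith
  finally show False using m[of "sq * sq / 2"] by simp
qed

end

theorem lemma4p2:
  fixes l :: real
  assumes "l > 0"
  shows
    "(\<forall>f \<in> {D_fun l, Gamma_fun l, (\<lambda>x. sqrt (Gamma_fun l x))}.
        (\<forall>x \<ge> 0. f x > 0) \<and> (\<exists>L. L-lipschitz_on {0..} f) \<and> bounded (f ` {0..}))
     \<and> bdd_above (A_fun l ` {0..}) \<and> \<not> bdd_below (A_fun l ` {0..})
     \<and> (\<exists>A'. continuous_on {0..} A' \<and>
          (\<forall>x \<ge> 0. (A_fun l has_real_derivative A' x) (at x within {0..})))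
     \<and> (\<forall>x \<ge> 0. \<exists>e > 0. \<exists>L. L-lipschitz_on (cball x e \<inter> {0..}) (A_fun l))
     \<and> (\<exists>K. \<forall>x \<ge> 0. \<forall>y \<ge> 0. \<bar>A_fun l x - A_fun l y\<bar> \<le> K * (1 + \<bar>x\<bar>) * \<bar>y - x\<bar>)
     \<and> (\<forall>x. 0 \<le> x \<and> x < 1 \<longrightarrow> A_fun l x > 0)
     \<and> (\<forall>x > 1. A_fun l x < 0)
     \<and> A_fun l 1 = 0"
proof -
  note l = assms
  have PD: "(\<forall>x \<ge> 0. D_fun l x > 0) \<and> (\<exists>L. L-lipschitz_on {0..} (D_fun l)) \<and> bounded (D_fun l ` {0..})"
  proof (intro conjI allI impI exI)
    show "D_fun l x > 0" if "x \<ge> 0" for x using D_pos[OF l that] .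
    show "bounded (D_fun l ` {0..})" unfolding bounded_iff
      using D_pos[OF l] D_le[OF l] by (intro exI[of _ "6 * l\<^sup>2"]) (auto simp: less_imp_le)
  qed (rule lip_D[OF l])
  have Gp: "Gamma_fun l x > 0" if "x \<ge> 0" for x using G_ge[OF l that] cG_pos[OF l] by simp
  have PG: "(\<forall>x \<ge> 0. Gamma_fun l x > 0) \<and> (\<exists>L. L-lipschitz_on {0..} (Gamma_fun l)) \<and> bounded (Gamma_fun l ` {0..})"
  proof (intro conjI allI impI exI)
    show "Gamma_fun l x > 0" if "x \<ge> 0" for x using Gp[OF that] .
    show "bounded (Gamma_fun l ` {0..})" unfolding bounded_iff
      using Gp G_le[OF l] by (intro exI[of _ "8 * l\<^sup>2"]) (auto simp: less_imp_le)
  qed (rule lip_G[OF l])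
  have PS: "(\<forall>x \<ge> 0. sqrt (Gamma_fun l x) > 0) \<and> (\<exists>L. L-lipschitz_on {0..} (\<lambda>x. sqrt (Gamma_fun l x)))
        \<and> bounded ((\<lambda>x. sqrt (Gamma_fun l x)) ` {0..})"
  proof (intro conjI allI impI exI)
    show "sqrt (Gamma_fun l x) > 0" if "x \<ge> 0" for x using Gp[OF that] by simp
    show "bounded ((\<lambda>x. sqrt (Gamma_fun l x)) ` {0..})" unfolding bounded_iff
      using Gp G_le[OF l] by (intro exI[of _ "sqrt (8 * l\<^sup>2)"]) (auto simp: less_imp_le)
  qed (rule lip_sqrtG[OF l])
  have P1: "\<forall>f \<in> {D_fun l, Gamma_fun l, (\<lambda>x. sqrt (Gamma_fun l x))}.
        (\<forall>x \<ge> 0. f x > 0) \<and> (\<exists>L. L-lipschitz_on {0..} f) \<and> bounded (f ` {0..})"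
    using PD PG PS by blast
  have Ale: "A_fun l x \<le> 8 * l\<^sup>2" if x: "x \<ge> 0" for x
  proof (cases "x = 0")
    case True then show ?thesis using G_le[OF l x] by (simp add: A_fun_def Gamma_fun_def)
  next
    case False
    then have x0: "x > 0" using x by simp
    have "0 \<le> 2 * x * D_fun l x" using D_pos[OF l x] x by simp
    then show ?thesis using A_eq[OF l x0] G_le[OF l x] by simp
  qed
  have P2: "bdd_above (A_fun l ` {0..})"
    unfolding bdd_above_def using Ale by auto
  have P3: "\<exists>A'. continuous_on {0..} A' \<and> (\<forall>x \<ge> 0. (A_fun l has_real_derivative A' x) (at x within {0..}))"
    using cont_Ad[OF l] A_deriv_within[OF l] by blast
  define K where "K = 2 * KA l + 48 * l\<^sup>2"
  have K0: "K \<ge> 0" unfolding K_def using KA_nonneg[OF l] by simp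
  have P4: "\<forall>x \<ge> 0. \<forall>y \<ge> 0. \<bar>A_fun l x - A_fun l y\<bar> \<le> K * (1 + \<bar>x\<bar>) * \<bar>y - x\<bar>"
    unfolding K_def using A_K[OF l] by blast
  have P5: "\<forall>x \<ge> 0. \<exists>e > 0. \<exists>L. L-lipschitz_on (cball x e \<inter> {0..}) (A_fun l)"
  proof (intro allI impI)
    fix x :: real assume x: "x \<ge> 0"
    have "(K * (2 + x))-lipschitz_on (cball x 1 \<inter> {0..}) (A_fun l)"
    proof (rule lipschitz_onI)
      fix y z assume y: "y \<in> cball x 1 \<inter> {0..}" and z: "z \<in> cball x 1 \<inter> {0..}"
      have y0: "y \<ge> 0" and yx: "\<bar>y\<bar> \<le> x + 1" using y by (auto simp: dist_real_def)
      have z0: "z \<ge> 0" using z by auto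
      have "dist (A_fun l y) (A_fun l z) \<le> K * (1 + \<bar>y\<bar>) * \<bar>z - y\<bar>"
        using P4 y0 z0 by (simp add: dist_real_def)
      also have "\<dots> \<le> K * (2 + x) * \<bar>z - y\<bar>"
        using K0 yx by (intro mult_right_mono mult_left_mono) auto
      finally show "dist (A_fun l y) (A_fun l z) \<le> K * (2 + x) * dist y z"
        by (simp add: dist_real_def abs_minus_commute)
    next
      show "0 \<le> K * (2 + x)" using K0 x by simp
    qed
    then show "\<exists>e > 0. \<exists>L. L-lipschitz_on (cball x e \<inter> {0..}) (A_fun l)" by (intro exI[of _ 1]) auto
  qed
  have P6: "\<forall>x. 0 \<le> x \<and> x < 1 \<longrightarrow> A_fun l x > 0" using A_pos_lt1[OF l] by blast
  have P7: "\<forall>x > 1. A_fun l x < 0" using A_neg_gt1[OF l] by blast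
  have P4': "\<exists>K. \<forall>x \<ge> 0. \<forall>y \<ge> 0. \<bar>A_fun l x - A_fun l y\<bar> \<le> K * (1 + \<bar>x\<bar>) * \<bar>y - x\<bar>"
    using P4 by blast
  show ?thesis using P1 P2 A_unbdd[OF l] P3 P5 P4' P6 P7 A_one[of l] by (intro conjI)
qed

end
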